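(* Let $(X,d)$ be a reflexive Busemann convex geodesic metric space and let $A,B\subseteq X$ be nonempty, closed and convex, with $B$ bounded. Define $$A_0=\{x\in A : d(x,y')=\operatorname{dist}(A,B)\text{ for some } y'\in B\},\qquad B_0=\{y\in B : d(x',y)=\operatorname{dist}(A,B)\text{ for some } x'\in A\}.$$ Then $A_0$ and $B_0$ are closed, convex, bounded and nonempty.
   Context: $\operatorname{dist}(A,B)=\inf\{d(x,y):x\in A,y\in B\}$. A geodesic space is one in which any two points $x,y$ are joined by a geodesic segment (an isometric image of $[0,d(x,y)]$); a subset is convex if it contains every geodesic segment joining any two of its points. A geodesic space is Busemann convex if for any geodesics $c_1:[0,l_1]\to X$, $c_2:[0,l_2]\to X$ one has $d(c_1(tl_1),c_2(tl_2))\le (1-t)d(c_1(0),c_2(0))+t\,d(c_1(l_1),c_2(l_2))$ for all $t\in[0,1]$. A geodesic space $X$ is reflexive if every decreasing chain $\{C_\alpha\}_{\alpha\in I}$ of nonempty closed convex bounded subsets of $X$ has nonempty intersection. *)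

theory Defs
  imports "HOL-Analysis.Analysis"
begin

definition geodesic_seg :: "(real \<Rightarrow> 'a::metric_space) \<Rightarrow> 'a \<Rightarrow> 'a \<Rightarrow> bool" where
  "geodesic_seg c x y \<longleftrightarrow> c 0 = x \<and> c (dist x y) = y \<and>
     (\<forall>s\<in>{0..dist x y}. \<forall>t\<in>{0..dist x y}. dist (c s) (c t) = \<bar>s - t\<bar>)"

definition geodesic_space :: "'a::metric_space itself \<Rightarrow> bool" where
  "geodesic_space _ \<longleftrightarrow> (\<forall>x y::'a. \<exists>c. geodesic_seg c x y)"

definition geo_convex :: "'a::metric_space set \<Rightarrow> bool" where
  "geo_convex C \<longleftrightarrow> (\<forall>x\<in>C. \<forall>y\<in>C. \<forall>c. geodesic_seg c x y \<longrightarrow> c ` {0..dist x y} \<subseteq> C)"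

definition busemann_convex :: "'a::metric_space itself \<Rightarrow> bool" where
  "busemann_convex _ \<longleftrightarrow>
    (\<forall>(c1::real \<Rightarrow> 'a) x1 y1 c2 x2 y2. geodesic_seg c1 x1 y1 \<longrightarrow> geodesic_seg c2 x2 y2 \<longrightarrow>
       (\<forall>t\<in>{0..1}. dist (c1 (t * dist x1 y1)) (c2 (t * dist x2 y2))
                    \<le> (1 - t) * dist x1 x2 + t * dist y1 y2))"

definition reflexive_space :: "'a::metric_space itself \<Rightarrow> bool" where
  "reflexive_space _ \<longleftrightarrow>
    (\<forall>F::'a set set. (\<forall>C\<in>F. C \<noteq> {} \<and> closed C \<and> geo_convex C \<and> bounded C) \<longrightarrow>
        (\<forall>C\<in>F. \<forall>D\<in>F. C \<subseteq> D \<or> D \<subseteq> C) \<longrightarrow> \<Inter>F \<noteq> {})"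

end

theory Submission
  imports Defs
begin

lemma infdist_ltE:
  assumes "infdist x C < b" "C \<noteq> {}"
  obtains a where "a \<in> C" "dist x a < b"
  using setdist_ltE[of "{x}" C b] assms by (auto simp: infdist_eq_setdist)

lemma infdist_geo:
  assumes geo: "geodesic_space TYPE('a::metric_space)" and bus: "busemann_convex TYPE('a)"
    and C: "C \<noteq> {}" "geo_convex C" and c: "geodesic_seg c x y" and t: "t \<in> {0..1}"
  shows "infdist (c (t * dist x y)) C \<le> (1 - t) * infdist x C + t * infdist (y::'a) C"
proof (rule field_le_epsilon)
  fix e :: real assume e: "e > 0"
  obtain a where a: "a \<in> C" "dist x a < infdist x C + e" using infdist_ltE[of x C "infdist x C + e"] C e by auto
  obtain b where b: "b \<in> C" "dist y b < infdist y C + e" using infdist_ltE[of y C "infdist y C + e"] C e by auto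
  obtain g where g: "geodesic_seg g a b" using geo unfolding geodesic_space_def by blast
  have ab: "t * dist a b \<in> {0..dist a b}" using t by (auto intro: mult_left_le_one_le)
  have gin: "g (t * dist a b) \<in> C" using C(2) a b g ab unfolding geo_convex_def by blast
  have "dist (c (t * dist x y)) (g (t * dist a b)) \<le> (1 - t) * dist x a + t * dist y b"
    using bus[unfolded busemann_convex_def, rule_format, OF c g t] .
  also have "\<dots> \<le> (1 - t) * (infdist x C + e) + t * (infdist y C + e)"
    using a b t by (intro add_mono mult_left_mono) auto
  also have "\<dots> = (1 - t) * infdist x C + t * infdist y C + e" by (simp add: algebra_simps)
  finally show "infdist (c (t * dist x y)) C \<le> (1 - t) * infdist x C + t * infdist y C + e"
    using infdist_le[OF gin, of "c (t * dist x y)"] by linarith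
qed

lemma sublevel_convex:
  assumes geo: "geodesic_space TYPE('a::metric_space)" and bus: "busemann_convex TYPE('a)"
    and C: "C \<noteq> {}" "geo_convex C" and K: "geo_convex K"
  shows "geo_convex {z\<in>K. infdist z (C::'a set) \<le> (r::real)}"
  unfolding geo_convex_def
proof (intro ballI allI impI subsetI)
  fix x y c z
  assume x: "x \<in> {z\<in>K. infdist z C \<le> r}" and y: "y \<in> {z\<in>K. infdist z C \<le> r}"
    and c: "geodesic_seg c x y" and z: "z \<in> c ` {0..dist x y}"
  then obtain s where s: "s \<in> {0..dist x y}" "z = c s" by blast
  have zK: "z \<in> K" using K x y c z unfolding geo_convex_def by blast
  have "infdist z C \<le> r"
  proof (cases "dist x y = 0")
    case True
    then have "s = 0" using s by auto
    then show ?thesis using s c x unfolding geodesic_seg_def by auto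
  next
    case False
    define t where "t = s / dist x y"
    have t: "t \<in> {0..1}" using s False by (auto simp: t_def)
    have "s = t * dist x y" using False by (simp add: t_def)
    then have "infdist z C \<le> (1 - t) * infdist x C + t * infdist y C"
      using infdist_geo[OF geo bus C c t] s by simp
    also have "\<dots> \<le> (1 - t) * r + t * r"
      using x y t by (intro add_mono mult_left_mono) auto
    finally show ?thesis by (simp add: algebra_simps)
  qed
  then show "z \<in> {z\<in>K. infdist z C \<le> r}" using zK by simp
qed

lemma geo_convex_UNIV: "geo_convex UNIV" by (simp add: geo_convex_def)

lemma geo_convex_sing: "geo_convex {p}"
  unfolding geo_convex_def geodesic_seg_def by auto

lemma sublevel_closed:
  assumes "closed K" shows "closed {z\<in>K. infdist z C \<le> (r::real)}"
proof -
  have "{z\<in>K. infdist z C \<le> r} = K \<inter> {z. infdist z C \<le> r}" by auto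
  moreover have "closed {z. infdist z C \<le> r}"
    by (intro closed_Collect_le continuous_intros)
  ultimately show ?thesis using assms by auto
qed

lemma reflexive_chain:
  assumes refl: "reflexive_space TYPE('a::metric_space)"
    and ne: "\<And>s. s > r \<Longrightarrow> S s \<noteq> {}" and cl: "\<And>s. closed (S s)"
    and cv: "\<And>s. geo_convex (S s)" and bd: "\<And>s. bounded ((S::real \<Rightarrow> 'a set) s)"
    and mono: "\<And>s s'. s \<le> s' \<Longrightarrow> S s \<subseteq> S s'"
  obtains q where "\<And>s. s > r \<Longrightarrow> q \<in> S s"
proof -
  have "\<Inter>(S ` {r<..}) \<noteq> {}"
  proof -
    have "\<forall>C\<in>S ` {r<..}. C \<noteq> {} \<and> closed C \<and> geo_convex C \<and> bounded C"
      using ne cl cv bd by auto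
    moreover have "\<forall>C\<in>S ` {r<..}. \<forall>D\<in>S ` {r<..}. C \<subseteq> D \<or> D \<subseteq> C"
      using mono by (metis imageE nle_le)
    ultimately show ?thesis using refl unfolding reflexive_space_def by blast
  qed
  then show ?thesis using that by auto
qed

lemma nearest:
  assumes geo: "geodesic_space TYPE('a::metric_space)" and bus: "busemann_convex TYPE('a)"
    and refl: "reflexive_space TYPE('a)"
    and C: "C \<noteq> {}" "geo_convex C" "closed C" and p: "infdist (p::'a) C \<le> r"
  obtains q where "q \<in> C" "dist p q \<le> r"
proof -
  define S where "S s = {z\<in>C. infdist z {p} \<le> s}" for s
  obtain q where q: "\<And>s. s > r \<Longrightarrow> q \<in> S s"
  proof (rule reflexive_chain[OF refl, of r S])
    fix s :: real assume "s > r"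
    then obtain a where "a \<in> C" "dist p a < s" using infdist_ltE[of p C s] C p by force
    then show "S s \<noteq> {}" by (auto simp: S_def dist_commute)
  next
    fix s show "closed (S s)" unfolding S_def by (rule sublevel_closed[OF C(3)])
  next
    fix s show "geo_convex (S s)" unfolding S_def by (rule sublevel_convex[OF geo bus _ geo_convex_sing C(2)]) simp
  next
    fix s show "bounded (S s)" unfolding S_def
      by (rule bounded_subset[OF bounded_cball[of p s]]) (auto simp: dist_commute)
  next
    fix s s' :: real assume "s \<le> s'" then show "S s \<subseteq> S s'" by (auto simp: S_def)
  qed auto
  have "q \<in> C" using q[of "r+1"] by (auto simp: S_def)
  moreover have "dist p q \<le> r"
  proof (rule field_le_epsilon)
    fix e :: real assume "e > 0" then show "dist p q \<le> r + e"
      using q[of "r+e"] by (auto simp: S_def dist_commute)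
  qed
  ultimately show ?thesis using that by blast
qed

theorem mainTheorem1:
  fixes A B :: "'a::metric_space set"
  assumes "geodesic_space TYPE('a)" and "busemann_convex TYPE('a)" and "reflexive_space TYPE('a)"
    and "A \<noteq> {}" "closed A" "geo_convex A"
    and "B \<noteq> {}" "closed B" "geo_convex B" "bounded B"
  defines "A0 \<equiv> {x\<in>A. \<exists>y'\<in>B. dist x y' = setdist A B}"
    and "B0 \<equiv> {y\<in>B. \<exists>x'\<in>A. dist x' y = setdist A B}"
  shows "closed A0 \<and> geo_convex A0 \<and> bounded A0 \<and> A0 \<noteq> {} \<and>
         closed B0 \<and> geo_convex B0 \<and> bounded B0 \<and> B0 \<noteq> {}"
proof -
  note geo = assms(1) and bus = assms(2) and refl = assms(3)
  let ?d = "setdist A B"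
  have A0eq: "A0 = {x\<in>A. infdist x B \<le> ?d}"
  proof safe
    fix x assume "x \<in> A0"
    then obtain y where y: "x \<in> A" "y \<in> B" "dist x y = ?d" unfolding A0_def by blast
    then show "x \<in> A" "infdist x B \<le> ?d" using infdist_le[of y B x] by auto
  next
    fix x assume x: "x \<in> A" "infdist x B \<le> ?d"
    then obtain q where "q \<in> B" "dist x q \<le> ?d"
      using nearest[OF geo bus refl assms(7) assms(9) assms(8)] by blast
    moreover have "?d \<le> dist x q" using x(1) \<open>q \<in> B\<close> by (rule setdist_le_dist)
    ultimately show "x \<in> A0" unfolding A0_def using x by force
  qed
  have B0eq: "B0 = {y\<in>B. infdist y A \<le> ?d}"
  proof safe
    fix x assume "x \<in> B0"
    then obtain y where y: "x \<in> B" "y \<in> A" "dist y x = ?d" unfolding B0_def by blast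
    then show "x \<in> B" "infdist x A \<le> ?d" using infdist_le[of y A x] by (auto simp: dist_commute)
  next
    fix x assume x: "x \<in> B" "infdist x A \<le> ?d"
    then obtain q where "q \<in> A" "dist x q \<le> ?d"
      using nearest[OF geo bus refl assms(4) assms(6) assms(5)] by blast
    moreover have "?d \<le> dist q x" using \<open>q \<in> A\<close> x(1) by (rule setdist_le_dist)
    ultimately show "x \<in> B0" unfolding B0_def using x by (force simp: dist_commute)
  qed
  have B0ne: "B0 \<noteq> {}"
  proof -
    define S where "S s = {y\<in>B. infdist y A \<le> s}" for s
    obtain q where q: "\<And>s. s > ?d \<Longrightarrow> q \<in> S s"
    proof (rule reflexive_chain[OF refl, of ?d S])
      fix s :: real assume "s > ?d"
      then obtain a b where "a \<in> A" "b \<in> B" "dist a b < s"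
        using setdist_ltE[of A B s] assms(4,7) by blast
      then have "infdist b A \<le> s" using infdist_le[of a A b] by (simp add: dist_commute)
      then show "S s \<noteq> {}" using \<open>b \<in> B\<close> by (auto simp: S_def)
    next
      fix s show "closed (S s)" unfolding S_def by (rule sublevel_closed[OF assms(8)])
    next
      fix s show "geo_convex (S s)" unfolding S_def by (rule sublevel_convex[OF geo bus assms(4,6,9)])
    next
      fix s show "bounded (S s)" unfolding S_def
        by (rule bounded_subset[OF assms(10)]) auto
    next
      fix s s' :: real assume "s \<le> s'" then show "S s \<subseteq> S s'" by (auto simp: S_def)
    qed auto
    have "q \<in> B" using q[of "?d+1"] by (auto simp: S_def)
    moreover have "infdist q A \<le> ?d"
    proof (rule field_le_epsilon)
      fix e :: real assume "e > 0" then show "infdist q A \<le> ?d + e"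
        using q[of "?d+e"] by (auto simp: S_def)
    qed
    ultimately show ?thesis unfolding B0eq by blast
  qed
  have A0ne: "A0 \<noteq> {}"
  proof -
    obtain y where "y \<in> B0" using B0ne by blast
    then obtain x where "x \<in> A" "y \<in> B" "dist x y = ?d" unfolding B0_def by blast
    then have "x \<in> A0" unfolding A0_def by blast
    then show ?thesis by blast
  qed
  have bA0: "bounded A0"
  proof -
    obtain b0 R where R: "B \<subseteq> cball b0 R" using assms(10) bounded_subset_cball by blast
    have "A0 \<subseteq> cball b0 (R + ?d)"
    proof
      fix x assume "x \<in> A0"
      then obtain y where "y \<in> B" "dist x y = ?d" unfolding A0_def by blast
      then show "x \<in> cball b0 (R + ?d)" using R dist_triangle[of b0 x y]
        by (auto simp: dist_commute)
    qed
    then show ?thesis using bounded_subset bounded_cball by blast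
  qed
  have bB0: "bounded B0" using assms(10) unfolding B0_def by (rule bounded_subset) auto
  have "closed A0" unfolding A0eq by (rule sublevel_closed[OF assms(5)])
  moreover have "closed B0" unfolding B0eq by (rule sublevel_closed[OF assms(8)])
  moreover have "geo_convex A0" unfolding A0eq by (rule sublevel_convex[OF geo bus assms(7,9,6)])
  moreover have "geo_convex B0" unfolding B0eq by (rule sublevel_convex[OF geo bus assms(4,6,9)])
  ultimately show ?thesis using A0ne B0ne bA0 bB0 by simp
qed

end
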